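(* Let $f(z):=\sum_{j=0}^\infty p_j\frac{z^j}{j!}$ with complex $p_j$ satisfying $|p_j|\le(j+2)^{-2}$ for all $j\ge0$, let $n\in\mathbb{N}$ and $N=2n+1$. For each $n\ge1$ there exist pairwise distinct complex numbers $\lambda_1,\dots,\lambda_N$ with $|\lambda_k|=1$ such that for every $r\in(0,1)$, \[\left|\sum_{k=1}^N\lambda_ke^{\lambda_kz}-f(z)\right|\le\frac{|z|^n}{n!}\frac{15}{1-r^{n+1}}\left(n+\frac{2}{1-r}\right)\left(1+\frac{|z|e^{|z|/r}}{rn+r}\right)\qquad\text{for all }z\in\mathbb{C}.\] *)

theory Defs
  imports "HOL-Analysis.Analysis"
begin

end

theory Submission
  imports Defs "HOL-Computational_Algebra.Polynomial_FPS"
begin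


lemma sum_inv_sq_bound:
  "(\<Sum>j=1..n. 1 / (real j + 1)^2) \<le> 1 - 1 / (real n + 1)"
proof (induction n)
  case 0 then show ?case by simp
next
  case (Suc n)
  have "1 / (real n + 2)^2 \<le> 1/(real n + 1) - 1/(real n + 2)"
  proof -
    have "1/(real n + 1) - 1/(real n + 2) = 1/((real n + 1)*(real n + 2))"
      by (simp add: field_simps)
    moreover have "1 / (real n + 2)^2 \<le> 1/((real n + 1)*(real n + 2))"
      unfolding power2_eq_square by (rule divide_left_mono) auto
    ultimately show ?thesis by simp
  qed
  then show ?case using Suc by (simp add: add.commute)
qed

lemma conv_bound:
  fixes m :: nat assumes "m \<ge> 1"
  shows "1/(real m + 1)^2 + (\<Sum>i=1..m-1. 1/((real i + 1)^2 * (real (m - i) + 1)^2))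
         \<le> real m / (real m + 1)^2"
proof -
  consider "m = 1" | "m = 2" | "m \<ge> 3" using assms by linarith
  then show ?thesis
  proof cases
    case 1 then show ?thesis by simp
  next
    case 2 then show ?thesis by (simp add: numeral_eq_Suc)
  next
    case 3
    define M where "M = real m + 2"
    have Mpos: "M > 0" unfolding M_def by simp
    have trm: "1/((real i + 1)^2 * (real (m - i) + 1)^2)
        \<le> 2/M^2 * (1/(real i + 1)^2 + 1/(real (m - i) + 1)^2)" if "i \<in> {1..m-1}" for i
    proof -
      have im: "i < m" using that 3 by auto
      define a where "a = real i + 1"
      define b where "b = real (m - i) + 1"
      have ab: "a + b = M" using im unfolding a_def b_def M_def by (simp add: of_nat_diff)
      have apos: "a > 0" "b > 0" unfolding a_def b_def by auto
      have e: "1/a + 1/b = M/(a*b)" using apos ab by (simp add: field_simps)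
      have "1/(a^2*b^2) = (1/a + 1/b)^2 / M^2"
        unfolding e using Mpos by (simp add: power_divide power_mult_distrib)
      also have "(1/a + 1/b)^2 \<le> 2 * (1/a^2 + 1/b^2)"
        using sum_squares_ge_zero[of "1/a - 1/b" 0]
        by (simp add: power2_eq_square algebra_simps)
      hence "(1/a + 1/b)^2 / M^2 \<le> 2 * (1/a^2 + 1/b^2) / M^2"
        using Mpos by (simp add: divide_right_mono)
      finally show ?thesis unfolding a_def b_def by simp
    qed
    have s1: "(\<Sum>i=1..m-1. 1/(real i + 1)^2) \<le> 1 - 1/real m"
      using sum_inv_sq_bound[of "m-1"] 3 by (simp add: of_nat_diff)
    have refl: "(\<Sum>i=1..m-1. 1/(real (m - i) + 1)^2) = (\<Sum>i=1..m-1. 1/(real i + 1)^2)"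
    proof -
      have "(\<Sum>i=1..m-1. 1/(real i + 1)^2) = (\<Sum>i=1..m-1. 1/(real (m - 1 + 1 - i) + 1)^2)"
        by (rule sum.atLeastAtMost_rev)
      also have "\<dots> = (\<Sum>i=1..m-1. 1/(real (m - i) + 1)^2)"
        using 3 by simp
      finally show ?thesis by simp
    qed
    have "(\<Sum>i=1..m-1. 1/((real i + 1)^2 * (real (m - i) + 1)^2))
        \<le> (\<Sum>i=1..m-1. 2/M^2 * (1/(real i + 1)^2 + 1/(real (m - i) + 1)^2))"
      by (rule sum_mono) (rule trm)
    also have "\<dots> = 2/M^2 * (2 * (\<Sum>i=1..m-1. 1/(real i + 1)^2))"
      unfolding sum_distrib_left[symmetric] sum.distrib refl by simp
    also have "\<dots> \<le> 2/M^2 * (2 * (1 - 1/real m))"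
      using s1 Mpos by (intro mult_left_mono) auto
    finally have S: "(\<Sum>i=1..m-1. 1/((real i + 1)^2 * (real (m - i) + 1)^2)) \<le> 4 * (1 - 1/real m) / M^2"
      by simp
    have key: "4 * (1 - 1/real m) / M^2 \<le> (real m - 1) / (real m + 1)^2"
    proof -
      have m3: "real m \<ge> 3" using 3 by simp
      have "4 * (real m + 1)^2 \<le> real m * M^2"
      proof -
        have x2: "real m * real m \<ge> 3 * real m" using m3 by (intro mult_right_mono) auto
        have x3: "real m * (real m * real m) \<ge> real m * 9" using x2 m3 by (intro mult_left_mono) linarith+
        have "4 + real m * 4 \<le> real m * (real m * real m)" using x3 m3 by linarith
        then show ?thesis unfolding M_def power2_eq_square by (simp add: algebra_simps)
      qed
      hence "(real m - 1) * (4 * (real m + 1)^2) \<le> (real m - 1) * (real m * M^2)"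
        using m3 by (intro mult_left_mono) auto
      thus ?thesis using m3 Mpos by (simp add: field_simps)
    qed
    have "real m / (real m + 1)^2 = 1/(real m + 1)^2 + (real m - 1) / (real m + 1)^2"
      by (simp add: field_simps)
    then show ?thesis using S key by linarith
  qed
qed

lemma lessThan_split0: "(m::nat) \<ge> 1 \<Longrightarrow> {..<m} = insert 0 {1..m-1}"
  by auto

lemma coeff_exists:
  fixes c :: "nat \<Rightarrow> complex"
  assumes cb: "\<And>m. m \<ge> 1 \<Longrightarrow> norm (c m) \<le> 1/(real m + 1)^2"
  shows "\<exists>a. a 0 = 1 \<and> (\<forall>m\<in>{1..n}. of_nat m * a m = - (\<Sum>i<m. a i * c (m - i)))
           \<and> (\<forall>m\<in>{1..n}. norm (a m) \<le> 1/(real m + 1)^2)"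
proof (induction n)
  case 0
  show ?case by (rule exI[of _ "\<lambda>_. 1"]) simp
next
  case (Suc n)
  then obtain a where a0: "a 0 = 1"
    and aeq: "\<forall>m\<in>{1..n}. of_nat m * a m = - (\<Sum>i<m. a i * c (m - i))"
    and ab: "\<forall>m\<in>{1..n}. norm (a m) \<le> 1/(real m + 1)^2" by blast
  define m where "m = Suc n"
  define v where "v = - (\<Sum>i<m. a i * c (m - i)) / of_nat m"
  define a' where "a' = a(m := v)"
  have same: "(\<Sum>i<k. a' i * c (k - i)) = (\<Sum>i<k. a i * c (k - i))" if "k \<le> m" for k
    using that unfolding a'_def by (intro sum.cong) auto
  have eqm: "of_nat m * a' m = - (\<Sum>i<m. a' i * c (m - i))"
  proof -
    have nz: "of_nat m \<noteq> (0::complex)" by (simp add: m_def del: of_nat_Suc)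
    show ?thesis unfolding same[OF order_refl] unfolding a'_def v_def using nz by simp
  qed
  have bm: "norm (a' m) \<le> 1/(real m + 1)^2"
  proof -
    have "norm (\<Sum>i<m. a i * c (m - i)) \<le> (\<Sum>i<m. norm (a i * c (m - i)))"
      by (rule norm_sum)
    also have "\<dots> = norm (c m) + (\<Sum>i=1..m-1. norm (a i) * norm (c (m - i)))"
    proof -
      have L: "{..<m} = insert 0 {1..m-1}" using lessThan_split0[of m] m_def by simp
      show ?thesis unfolding L by (subst sum.insert) (auto simp: a0 norm_mult)
    qed
    also have "\<dots> \<le> 1/(real m + 1)^2 + (\<Sum>i=1..m-1. 1/((real i + 1)^2 * (real (m - i) + 1)^2))"
    proof (intro add_mono sum_mono)
      show "norm (c m) \<le> 1/(real m + 1)^2" using cb[of m] m_def by simp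
      fix i assume i: "i \<in> {1..m-1}"
      have "norm (a i) \<le> 1/(real i + 1)^2" using ab i m_def by auto
      moreover have "norm (c (m - i)) \<le> 1/(real (m - i) + 1)^2" using cb[of "m - i"] i by auto
      ultimately have "norm (a i) * norm (c (m - i)) \<le> 1/(real i + 1)^2 * (1/(real (m - i) + 1)^2)"
        by (intro mult_mono) auto
      then show "norm (a i) * norm (c (m - i)) \<le> 1/((real i + 1)^2 * (real (m - i) + 1)^2)"
        by simp
    qed
    also have "\<dots> \<le> real m / (real m + 1)^2" by (rule conv_bound) (simp add: m_def)
    finally have S: "norm (\<Sum>i<m. a i * c (m - i)) \<le> real m / (real m + 1)^2" .
    have "norm (a' m) = norm (\<Sum>i<m. a i * c (m - i)) / real m"
      unfolding a'_def v_def by (simp add: norm_divide)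
    also have "\<dots> \<le> (real m / (real m + 1)^2) / real m"
      using S by (intro divide_right_mono) auto
    also have "\<dots> = 1/(real m + 1)^2" by (simp add: m_def)
    finally show ?thesis .
  qed
  show ?case
  proof (intro exI[of _ a'] conjI ballI)
    show "a' 0 = 1" using a0 unfolding a'_def m_def by simp
  next
    fix k assume k: "k \<in> {1..Suc n}"
    show "of_nat k * a' k = - (\<Sum>i<k. a' i * c (k - i))"
    proof (cases "k = m")
      case True then show ?thesis using eqm by simp
    next
      case False
      then have "k \<in> {1..n}" using k m_def by auto
      then show ?thesis using aeq False same[of k] m_def unfolding a'_def by auto
    qed
    show "norm (a' k) \<le> 1/(real k + 1)^2"
    proof (cases "k = m")
      case True then show ?thesis using bm by simp
    next
      case False
      then have "k \<in> {1..n}" using k m_def by auto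
      then show ?thesis using ab False unfolding a'_def by auto
    qed
  qed
qed



definition Gs :: "complex \<Rightarrow> complex fps" where
  "Gs c = Abs_fps (\<lambda>m. if m = 0 then 0 else c ^ m)"

lemma Gs_key: "(1 - fps_const c * fps_X) * Gs c = fps_const c * fps_X"
proof (rule fps_ext)
  fix m
  have "(1 - fps_const c * fps_X) * Gs c = Gs c - fps_const c * (fps_X * Gs c)"
    by (simp add: algebra_simps)
  then show "fps_nth ((1 - fps_const c * fps_X) * Gs c) m = fps_nth (fps_const c * fps_X) m"
    by (cases m) (auto simp: Gs_def fps_X_nth)
qed

lemma newton_fps:
  fixes l :: "nat \<Rightarrow> complex" and K :: "nat set"
  assumes "finite K"
  shows "fps_X * fps_deriv (\<Prod>k\<in>K. 1 - fps_const (l k) * fps_X)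
       = - (\<Prod>k\<in>K. 1 - fps_const (l k) * fps_X) * (\<Sum>k\<in>K. Gs (l k))"
  using assms
proof (induction K rule: finite_induct)
  case empty then show ?case by simp
next
  case (insert k K)
  define P where "P = (\<Prod>k\<in>K. 1 - fps_const (l k) * fps_X)"
  define E where "E = (\<Sum>k\<in>K. Gs (l k))"
  define F where "F = 1 - fps_const (l k) * fps_X"
  have IH: "fps_X * fps_deriv P = - P * E" using insert.IH unfolding P_def E_def .
  have dF: "fps_deriv F = - fps_const (l k)" unfolding F_def by simp
  have key: "F * Gs (l k) = fps_const (l k) * fps_X" unfolding F_def by (rule Gs_key)
  have "fps_X * fps_deriv (F * P) = fps_X * (fps_deriv F * P) + F * (fps_X * fps_deriv P)"
    by (simp add: algebra_simps)
  also have "\<dots> = - (fps_const (l k) * fps_X) * P - F * P * E"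
    unfolding dF IH by algebra
  also have "\<dots> = - (F * P) * (E + Gs (l k))"
    unfolding key[symmetric] by algebra
  finally show ?case using insert.hyps unfolding P_def E_def F_def
    by (simp add: add.commute)
qed

lemma newton_coeff:
  fixes l :: "nat \<Rightarrow> complex" and K :: "nat set"
  assumes "finite K" and "m \<ge> 1"
  defines "A \<equiv> (\<Prod>k\<in>K. 1 - fps_const (l k) * fps_X)"
  shows "of_nat m * fps_nth A m = - (\<Sum>i<m. fps_nth A i * (\<Sum>k\<in>K. l k ^ (m - i)))"
proof -
  have "fps_nth (fps_X * fps_deriv A) m = fps_nth (- A * (\<Sum>k\<in>K. Gs (l k))) m"
    using newton_fps[OF assms(1), of l] unfolding A_def by simp
  moreover have "fps_nth (fps_X * fps_deriv A) m = of_nat m * fps_nth A m"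
    using assms(2) by simp
  moreover have "fps_nth (- A * (\<Sum>k\<in>K. Gs (l k))) m = - (\<Sum>i=0..m. fps_nth A i * (\<Sum>k\<in>K. fps_nth (Gs (l k)) (m - i)))"
    by (simp add: fps_mult_nth fps_sum_nth sum_negf)
  moreover have "(\<Sum>i=0..m. fps_nth A i * (\<Sum>k\<in>K. fps_nth (Gs (l k)) (m - i))) = (\<Sum>i<m. fps_nth A i * (\<Sum>k\<in>K. l k ^ (m - i)))"
  proof -
    have "(\<Sum>i=0..m. fps_nth A i * (\<Sum>k\<in>K. fps_nth (Gs (l k)) (m - i))) = (\<Sum>i<Suc m. fps_nth A i * (\<Sum>k\<in>K. fps_nth (Gs (l k)) (m - i)))"
      by (simp add: atLeast0AtMost lessThan_Suc_atMost)
    also have "\<dots> = (\<Sum>i<m. fps_nth A i * (\<Sum>k\<in>K. fps_nth (Gs (l k)) (m - i)))"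
      by (simp add: Gs_def)
    also have "\<dots> = (\<Sum>i<m. fps_nth A i * (\<Sum>k\<in>K. l k ^ (m - i)))"
      by (intro sum.cong refl) (simp add: Gs_def)
    finally show ?thesis .
  qed
  ultimately show ?thesis by simp
qed



definition gfun :: "(nat \<Rightarrow> complex) \<Rightarrow> nat \<Rightarrow> real \<Rightarrow> real" where
  "gfun a n \<theta> = 2 * cos (real (2*n+1) * \<theta> / 2)
     + (\<Sum>m=1..n. 2 * Re (a m * cis ((real m - real (2*n+1) / 2) * \<theta>)))"

definition Rpoly :: "(nat \<Rightarrow> complex) \<Rightarrow> nat \<Rightarrow> complex poly" where
  "Rpoly a n = 1 + monom 1 (2*n+1) + (\<Sum>m=1..n. monom (a m) m + monom (cnj (a m)) (2*n+1 - m))"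

lemma cos_cis_sum: "complex_of_real (2 * cos x) = cis x + cis (-x)"
  by (simp add: complex_eq_iff)

lemma cis_pow: "cis t ^ k = cis (real k * t)"
  by (induction k) (simp_all add: cis_mult algebra_simps)

lemma term_id:
  assumes "m \<le> N"
  shows "cis (real N * \<theta> / 2) * complex_of_real (2 * Re (b * cis ((real m - real N / 2) * \<theta>)))
     = b * cis \<theta> ^ m + cnj b * cis \<theta> ^ (N - m)"
proof -
  have "complex_of_real (2 * Re (b * cis ((real m - real N / 2) * \<theta>)))
      = b * cis ((real m - real N / 2) * \<theta>) + cnj b * cis (- ((real m - real N / 2) * \<theta>))"
    unfolding complex_add_cnj[symmetric] complex_cnj_mult cis_cnj ..
  moreover have "cis (real N * \<theta> / 2) * cis ((real m - real N / 2) * \<theta>) = cis \<theta> ^ m"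
    unfolding cis_pow by (simp add: cis_mult algebra_simps)
  moreover have "cis (real N * \<theta> / 2) * cis (- ((real m - real N / 2) * \<theta>)) = cis \<theta> ^ (N - m)"
    unfolding cis_pow using assms by (simp add: cis_mult algebra_simps of_nat_diff)
  ultimately show ?thesis by (simp add: algebra_simps)
qed

lemma Rpoly_cis:
  "poly (Rpoly a n) (cis \<theta>) = cis (real (2*n+1) * \<theta> / 2) * complex_of_real (gfun a n \<theta>)"
proof -
  define N where "N = 2*n+1"
  have "cis (real N * \<theta> / 2) * complex_of_real (2 * cos (real N * \<theta> / 2)) = 1 + cis \<theta> ^ N"
    unfolding cos_cis_sum unfolding cis_pow by (simp add: cis_mult algebra_simps)
  moreover have "cis (real N * \<theta> / 2) * complex_of_real (\<Sum>m=1..n. 2 * Re (a m * cis ((real m - real N / 2) * \<theta>)))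
     = (\<Sum>m=1..n. a m * cis \<theta> ^ m + cnj (a m) * cis \<theta> ^ (N - m))"
    unfolding of_real_sum sum_distrib_left
    by (intro sum.cong refl term_id) (auto simp: N_def)
  ultimately show ?thesis
    unfolding gfun_def Rpoly_def N_def[symmetric]
    by (simp add: poly_sum poly_monom distrib_left)
qed

lemma gfun_cont: "continuous_on S (gfun a n)"
  unfolding gfun_def by (intro continuous_intros) auto

lemma gfun_dev: "\<bar>gfun a n \<theta> - 2 * cos (real (2*n+1) * \<theta> / 2)\<bar> \<le> 2 * (\<Sum>m=1..n. norm (a m))"
proof -
  have "\<bar>gfun a n \<theta> - 2 * cos (real (2*n+1) * \<theta> / 2)\<bar>
      = \<bar>\<Sum>m=1..n. 2 * Re (a m * cis ((real m - real (2*n+1) / 2) * \<theta>))\<bar>"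
    unfolding gfun_def by simp
  also have "\<dots> \<le> (\<Sum>m=1..n. \<bar>2 * Re (a m * cis ((real m - real (2*n+1) / 2) * \<theta>))\<bar>)"
    by (rule sum_abs)
  also have "\<dots> \<le> (\<Sum>m=1..n. 2 * norm (a m))"
  proof (rule sum_mono)
    fix m
    have "\<bar>Re (a m * cis ((real m - real (2*n+1) / 2) * \<theta>))\<bar> \<le> norm (a m * cis ((real m - real (2*n+1) / 2) * \<theta>))"
      by (rule abs_Re_le_cmod)
    also have "\<dots> = norm (a m)" by (simp add: norm_mult)
    finally show "\<bar>2 * Re (a m * cis ((real m - real (2*n+1) / 2) * \<theta>))\<bar> \<le> 2 * norm (a m)"
      by simp
  qed
  finally show ?thesis by (simp add: sum_distrib_left)
qed

lemma gfun_grid: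
  assumes small: "(\<Sum>m=1..n. norm (a m)) < 1"
  shows "(even j \<longrightarrow> gfun a n (2 * pi * real j / real (2*n+1)) > 0)
       \<and> (odd j \<longrightarrow> gfun a n (2 * pi * real j / real (2*n+1)) < 0)"
proof -
  have e: "real (2*n+1) * (2 * pi * real j / real (2*n+1)) / 2 = real j * pi"
    by (simp add: field_simps)
  have d: "\<bar>gfun a n (2 * pi * real j / real (2*n+1)) - 2 * (-1)^j\<bar> < 2"
    using gfun_dev[of a n "2 * pi * real j / real (2*n+1)"] small unfolding e cos_npi by linarith
  show ?thesis using d by (auto simp: abs_if split: if_splits)
qed

lemma roots_exist:
  assumes small: "(\<Sum>m=1..n. norm (a m)) < 1"
  shows "\<exists>\<phi>. \<forall>j<2*n+1. 2 * pi * real j / real (2*n+1) < \<phi> j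
      \<and> \<phi> j < 2 * pi * real (Suc j) / real (2*n+1) \<and> gfun a n (\<phi> j) = 0"
proof -
  define t where "t j = 2 * pi * real j / real (2*n+1)" for j
  have tle: "t j \<le> t (Suc j)" for j unfolding t_def by (simp add: divide_right_mono)
  have "\<exists>x. t j < x \<and> x < t (Suc j) \<and> gfun a n x = 0" for j
  proof -
    have gj: "gfun a n (t j) \<noteq> 0" "gfun a n (t (Suc j)) \<noteq> 0"
      using gfun_grid[OF small, of j] gfun_grid[OF small, of "Suc j"] unfolding t_def
      by (cases "even j"; auto)+
    have "\<exists>x. t j \<le> x \<and> x \<le> t (Suc j) \<and> gfun a n x = 0"
    proof (cases "even j")
      case True
      then have "gfun a n (t j) > 0" "gfun a n (t (Suc j)) < 0"
        using gfun_grid[OF small, of j] gfun_grid[OF small, of "Suc j"] unfolding t_def by auto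
      then show ?thesis by (intro IVT2' tle gfun_cont) auto
    next
      case False
      then have "gfun a n (t j) < 0" "gfun a n (t (Suc j)) > 0"
        using gfun_grid[OF small, of j] gfun_grid[OF small, of "Suc j"] unfolding t_def by auto
      then show ?thesis by (intro IVT' tle gfun_cont) auto
    qed
    then obtain x where "t j \<le> x" "x \<le> t (Suc j)" "gfun a n x = 0" by blast
    moreover have "x \<noteq> t j" "x \<noteq> t (Suc j)" using gj \<open>gfun a n x = 0\<close> by auto
    ultimately show ?thesis by (intro exI[of _ x]) auto
  qed
  then obtain \<phi> where "\<And>j. t j < \<phi> j \<and> \<phi> j < t (Suc j) \<and> gfun a n (\<phi> j) = 0" by metis
  then show ?thesis unfolding t_def by blast
qed



lemma coeff_Rpoly:
  assumes "i \<le> n" "i \<ge> 1"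
  shows "coeff (Rpoly a n) i = a i"
proof -
  have z: "(\<Sum>m=1..n. coeff (monom (cnj (a m)) (2*n+1 - m)) i) = 0"
    using assms by (intro sum.neutral) (auto simp: coeff_monom)
  have "(\<Sum>m=1..n. coeff (monom (a m) m) i) = (\<Sum>m=1..n. if m = i then a m else 0)"
    by (intro sum.cong refl) (auto simp: coeff_monom)
  also have "\<dots> = a i" using assms by (simp add: sum.delta)
  finally have o: "(\<Sum>m=1..n. coeff (monom (a m) m) i) = a i" .
  show ?thesis unfolding Rpoly_def using assms z o
    by (simp add: coeff_sum sum.distrib coeff_monom)
qed

lemma coeff_Rpoly0: "coeff (Rpoly a n) 0 = 1"
  unfolding Rpoly_def by (simp add: coeff_sum coeff_monom)

lemma poly_Rpoly0: "poly (Rpoly a n) 0 = 1"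
proof -
  have z: "(\<Sum>m=1..n. poly (monom (a m) m) 0 + poly (monom (cnj (a m)) (2*n+1 - m)) 0) = 0"
    by (intro sum.neutral) (auto simp: poly_monom power_0_left)
  show ?thesis unfolding Rpoly_def poly_add poly_sum z by (simp add: poly_monom)
qed

lemma degree_Rpoly: "degree (Rpoly a n) \<le> 2*n+1"
  unfolding Rpoly_def
  by (intro degree_add_le degree_sum_le order.trans[OF degree_monom_le]) (auto intro: order.trans[OF degree_monom_le])

lemma cis_inj_interval:
  assumes "0 < x" "x < y" "y < 2 * pi"
  shows "cis x \<noteq> cis y"
proof
  assume "cis x = cis y"
  then have "cis (y - x) = 1"
    by (metis cis_divide divide_self_if cis_neq_zero)
  then have "cos (y - x) = 1" by (metis cis.simps(1) one_complex.simps(1))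
  then obtain k :: int where k: "y - x = real_of_int k * 2 * pi" unfolding cos_one_2pi_int by blast
  have h1: "0 < real_of_int k * (2 * pi)" "real_of_int k * (2 * pi) < 1 * (2 * pi)"
    using assms k by linarith+
  have "real_of_int k < 1" using mult_right_less_imp_less[OF h1(2)] by simp
  moreover have "0 < real_of_int k" using h1(1) pi_gt_zero by (simp add: zero_less_mult_iff)
  ultimately have "0 < k" "k < 1" by simp_all
  then show False by simp
qed


lemma sum_split0:
  fixes f :: "nat \<Rightarrow> 'a::comm_monoid_add"
  assumes "m \<ge> 1" shows "(\<Sum>i<m. f i) = f 0 + (\<Sum>i=1..m-1. f i)"
proof -
  have "{..<m} = insert 0 {1..m-1}" using lessThan_split0 assms by simp
  then show ?thesis by (simp add: sum.insert)
qed

lemma power_sums_match: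
  fixes a c s :: "nat \<Rightarrow> complex"
  assumes a0: "a 0 = 1"
    and ec: "\<forall>m\<in>{1..n}. of_nat m * a m = - (\<Sum>i<m. a i * c (m - i))"
    and es: "\<forall>m\<in>{1..n}. of_nat m * a m = - (\<Sum>i<m. a i * s (m - i))"
  shows "\<forall>m\<in>{1..n}. s m = c m"
proof -
  have "m \<in> {1..n} \<longrightarrow> s m = c m" for m
  proof (induction m rule: less_induct)
    case (less m)
    show ?case
    proof
      assume m: "m \<in> {1..n}"
      have L: "{..<m} = insert 0 {1..m-1}" using lessThan_split0[of m] m by simp
      have eq: "(\<Sum>i<m. a i * s (m - i)) = (\<Sum>i<m. a i * c (m - i))"
        using ec[rule_format, OF m] es[rule_format, OF m] by simp
      have mid: "(\<Sum>i=1..m-1. a i * s (m - i)) = (\<Sum>i=1..m-1. a i * c (m - i))"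
      proof (intro sum.cong refl)
        fix i assume i: "i \<in> {1..m-1}"
        then have "m - i < m" "m - i \<in> {1..n}" using m by auto
        then show "a i * s (m - i) = a i * c (m - i)" using less.IH by auto
      qed
      from eq have "a 0 * s m + (\<Sum>i=1..m-1. a i * s (m - i)) = a 0 * c m + (\<Sum>i=1..m-1. a i * c (m - i))"
        using sum_split0[of m "\<lambda>i. a i * s (m - i)"] sum_split0[of m "\<lambda>i. a i * c (m - i)"] m by simp
      then show "s m = c m" using mid a0 by simp
    qed
  qed
  then show ?thesis by blast
qed

lemma unit_points:
  fixes a c :: "nat \<Rightarrow> complex"
  assumes small: "(\<Sum>m=1..n. norm (a m)) < 1"
    and a0: "a 0 = 1"
    and ec: "\<forall>m\<in>{1..n}. of_nat m * a m = - (\<Sum>i<m. a i * c (m - i))"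
  shows "\<exists>w. inj_on w {..<2*n+1} \<and> (\<forall>j<2*n+1. norm (w j) = 1)
          \<and> (\<forall>m\<in>{1..n}. (\<Sum>j<2*n+1. w j ^ m) = c m)"
proof -
  define N where "N = 2*n+1"
  obtain \<phi> where \<phi>: "\<And>j. j < N \<Longrightarrow> 2 * pi * real j / real N < \<phi> j
      \<and> \<phi> j < 2 * pi * real (Suc j) / real N \<and> gfun a n (\<phi> j) = 0"
    using roots_exist[OF small] unfolding N_def by blast
  define u where "u j = cis (\<phi> j)" for j
  define w where "w j = cnj (u j)" for j
  have Ru: "poly (Rpoly a n) (u j) = 0" if "j < N" for j
    unfolding u_def Rpoly_cis using \<phi>[OF that] by simp
  have \<phi>pos: "0 < \<phi> j" "\<phi> j < 2 * pi" if "j < N" for j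
  proof -
    have "0 \<le> 2 * pi * real j / real N" by simp
    then show "0 < \<phi> j" using \<phi>[OF that] by linarith
    have "2 * pi * real (Suc j) / real N \<le> 2 * pi * real N / real N"
      using that by (intro divide_right_mono mult_left_mono) auto
    then show "\<phi> j < 2 * pi" using \<phi>[OF that] unfolding N_def by simp
  qed
  have \<phi>mono: "\<phi> j < \<phi> k" if "j < k" "k < N" for j k
  proof -
    have "2 * pi * real (Suc j) / real N \<le> 2 * pi * real k / real N"
      using that by (intro divide_right_mono mult_left_mono) auto
    moreover have "j < N" using that by simp
    ultimately show ?thesis using \<phi>[of j] \<phi>[of k] that by linarith
  qed
  have uinj: "inj_on u {..<N}"
  proof (rule inj_onI)
    fix j k assume jk: "j \<in> {..<N}" "k \<in> {..<N}" "u j = u k"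
    show "j = k"
    proof (rule ccontr)
      assume "j \<noteq> k"
      then consider "j < k" | "k < j" by linarith
      then show False
      proof cases
        case 1 then show False using cis_inj_interval[of "\<phi> j" "\<phi> k"] \<phi>pos[of j] \<phi>pos[of k] \<phi>mono[of j k] jk
          unfolding u_def by auto
      next
        case 2 then show False using cis_inj_interval[of "\<phi> k" "\<phi> j"] \<phi>pos[of j] \<phi>pos[of k] \<phi>mono[of k j] jk
          unfolding u_def by auto
      qed
    qed
  qed
  have winj: "inj_on w {..<N}"
    using uinj unfolding w_def inj_on_def by auto
  have wnorm: "norm (w j) = 1" for j unfolding w_def u_def by simp
  define Qp where "Qp = (\<Prod>j<N. [:1, - w j:])"
  have polyQ: "poly Qp x = (\<Prod>j<N. 1 - w j * x)" for x
    unfolding Qp_def by (simp add: poly_prod mult.commute)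
  have Qu: "poly Qp (u j) = 0" if "j < N" for j
  proof -
    have "1 - w j * u j = 0" unfolding w_def u_def by (simp add: cis_cnj cis_mult)
    then show ?thesis unfolding polyQ using that by (auto intro: bexI[of _ j])
  qed
  have degQ: "degree Qp \<le> N"
  proof -
    have "degree Qp \<le> (\<Sum>j<N. degree [:1, - w j:])"
      unfolding Qp_def using degree_prod_sum_le[of "{..<N}" "\<lambda>j. [:1, - w j:]"] by (simp add: o_def)
    also have "\<dots> \<le> (\<Sum>j<N. 1)" by (intro sum_mono) simp
    finally show ?thesis by simp
  qed
  have RQ: "Rpoly a n = Qp"
  proof (rule ccontr)
    assume ne: "Rpoly a n \<noteq> Qp"
    define D where "D = Rpoly a n - Qp"
    have Dne: "D \<noteq> 0" using ne unfolding D_def by simp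
    have degD: "degree D \<le> N"
      unfolding D_def using degree_Rpoly[of a n] degQ unfolding N_def[symmetric]
      by (intro degree_diff_le) auto
    have sub: "insert 0 (u ` {..<N}) \<subseteq> {x. poly D x = 0}"
      unfolding D_def using Ru Qu by (auto simp: poly_Rpoly0 polyQ)
    have cardI: "card (insert 0 (u ` {..<N})) = N + 1"
    proof -
      have "0 \<notin> u ` {..<N}" unfolding u_def by auto
      then show ?thesis using card_image[OF uinj] by simp
    qed
    have "N + 1 \<le> card {x. poly D x = 0}"
      unfolding cardI[symmetric] by (intro card_mono poly_roots_finite Dne sub)
    also have "\<dots> \<le> degree D" by (rule card_poly_roots_bound[OF Dne])
    finally show False using degD by simp
  qed
  define A where "A = (\<Prod>j\<in>{..<N}. 1 - fps_const (w j) * fps_X)"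
  have Aeq: "A = fps_of_poly Qp"
    unfolding A_def Qp_def fps_of_poly_prod
    by (intro prod.cong refl) (simp add: fps_of_poly_pCons fps_of_poly_const)
  have Anth: "fps_nth A i = a i" if "i \<le> n" for i
  proof (cases "i = 0")
    case True then show ?thesis unfolding Aeq RQ[symmetric] by (simp add: coeff_Rpoly0 a0)
  next
    case False then show ?thesis unfolding Aeq RQ[symmetric] using that by (simp add: coeff_Rpoly)
  qed
  have es: "\<forall>m\<in>{1..n}. of_nat m * a m = - (\<Sum>i<m. a i * (\<Sum>j<N. w j ^ (m - i)))"
  proof
    fix m assume m: "m \<in> {1..n}"
    have "of_nat m * fps_nth A m = - (\<Sum>i<m. fps_nth A i * (\<Sum>j\<in>{..<N}. w j ^ (m - i)))"
      unfolding A_def by (rule newton_coeff) (use m in auto)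
    moreover have "(\<Sum>i<m. fps_nth A i * (\<Sum>j\<in>{..<N}. w j ^ (m - i))) = (\<Sum>i<m. a i * (\<Sum>j<N. w j ^ (m - i)))"
      using m by (intro sum.cong refl) (simp add: Anth)
    ultimately show "of_nat m * a m = - (\<Sum>i<m. a i * (\<Sum>j<N. w j ^ (m - i)))"
      using Anth[of m] m by simp
  qed
  have "\<forall>m\<in>{1..n}. (\<Sum>j<N. w j ^ m) = c m"
    using power_sums_match[OF a0 ec es] .
  then show ?thesis using winj wnorm unfolding N_def by blast
qed



lemma exp_sums_c: "(\<lambda>j. x^j / fact j) sums exp (x::'a::{real_normed_field,banach})"
proof -
  have "(\<lambda>j. x^j /\<^sub>R fact j) = (\<lambda>j. x^j / fact j)"
    by (rule ext) (simp add: scaleR_conv_of_real divide_inverse mult.commute)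
  then show ?thesis using exp_converges[of x] by simp
qed

lemma fact_split_bound:
  fixes x :: real and n i :: nat
  assumes "x \<ge> 0"
  shows "x^(Suc i + n) / fact (Suc i + n) \<le> x^n / fact n * (x / (real n + 1) * (x^i / fact i))"
proof -
  have "fact (Suc n) * fact i dvd (fact (Suc n + i) :: nat)" by (rule fact_fact_dvd_fact)
  moreover have "Suc n + i = Suc i + n" by simp
  ultimately have "fact (Suc n) * fact i \<le> (fact (Suc i + n) :: nat)" by (metis dvd_imp_le fact_gt_zero)
  then have "real (fact (Suc n) * fact i) \<le> real (fact (Suc i + n))" by (simp only: of_nat_le_iff)
  then have le: "(fact (Suc n) :: real) * fact i \<le> fact (Suc i + n)"
    by (simp only: of_nat_mult of_nat_fact)
  have A: "x^(Suc i + n) / fact (Suc i + n) \<le> x^(Suc i + n) / (fact (Suc n) * fact i)"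
    using le assms by (intro divide_left_mono) (auto intro!: mult_pos_pos)
  have pw: "x^(Suc i + n) = x^n * (x * x^i)" by (simp add: power_add mult_ac)
  have fs: "(fact (Suc n) :: real) * fact i = fact n * ((real n + 1) * fact i)"
    by (simp add: fact_Suc algebra_simps)
  have B: "x^(Suc i + n) / (fact (Suc n) * fact i) = x^n / fact n * (x / (real n + 1) * (x^i / fact i))"
    unfolding pw fs by (simp only: times_divide_times_eq)
  show ?thesis using A B by simp
qed

lemma analytic_bound:
  fixes lam p :: "nat \<Rightarrow> complex" and n N :: nat and z :: complex
  assumes ln: "\<forall>k\<in>{1..N}. norm (lam k) = 1"
    and pb: "\<forall>j. norm (p j) \<le> 1"
    and ps: "\<forall>j<n. (\<Sum>k=1..N. lam k ^ (j+1)) = p j"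
  shows "norm ((\<Sum>k=1..N. lam k * exp (lam k * z)) - (\<Sum>j. p j * z^j / of_nat (fact j)))
     \<le> (real N + 1) * (norm z ^ n / fact n * (1 + norm z * exp (norm z) / (real n + 1)))"
proof -
  define x where "x = norm z"
  have x0: "x \<ge> 0" unfolding x_def by simp
  define s where "s j = (\<Sum>k=1..N. lam k ^ (j+1))" for j
  define t where "t j = s j * z^j / fact j - p j * z^j / of_nat (fact j)" for j
  have S1: "(\<lambda>j. s j * z^j / fact j) sums (\<Sum>k=1..N. lam k * exp (lam k * z))"
  proof -
    have "(\<lambda>j. \<Sum>k\<in>{1..N}. lam k * ((lam k * z)^j / fact j)) sums (\<Sum>k=1..N. lam k * exp (lam k * z))"
      by (intro sums_sum sums_mult exp_sums_c)
    moreover have "(\<Sum>k\<in>{1..N}. lam k * ((lam k * z)^j / fact j)) = s j * z^j / fact j" for j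
    proof -
      have "(\<Sum>k\<in>{1..N}. lam k * ((lam k * z)^j / fact j)) = (\<Sum>k\<in>{1..N}. lam k ^ (j+1) * z^j / fact j)"
        by (intro sum.cong refl) (simp add: power_mult_distrib)
      also have "\<dots> = s j * z^j / fact j"
        unfolding s_def by (simp add: sum_distrib_right sum_divide_distrib)
      finally show ?thesis .
    qed
    ultimately show ?thesis by simp
  qed
  have sumf: "summable (\<lambda>j. p j * z^j / of_nat (fact j))"
  proof (rule summable_comparison_test'[where g="\<lambda>j. x^j / fact j" and N=0])
    show "summable (\<lambda>j. x^j / fact j)" by (rule sums_summable[OF exp_sums_c])
    fix j :: nat
    have "norm (p j * z^j / of_nat (fact j)) = norm (p j) * (x^j / fact j)"
      unfolding x_def by (simp add: norm_mult norm_divide norm_power)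
    also have "\<dots> \<le> 1 * (x^j / fact j)" using pb x0 by (intro mult_right_mono) auto
    finally show "norm (p j * z^j / of_nat (fact j)) \<le> x^j / fact j" by simp
  qed
  have St: "t sums ((\<Sum>k=1..N. lam k * exp (lam k * z)) - (\<Sum>j. p j * z^j / of_nat (fact j)))"
    unfolding t_def by (intro sums_diff S1 summable_sums sumf)
  have t0: "t j = 0" if "j < n" for j
    using ps that unfolding t_def s_def by simp
  have St': "(\<lambda>i. t (i+n)) sums ((\<Sum>k=1..N. lam k * exp (lam k * z)) - (\<Sum>j. p j * z^j / of_nat (fact j)))"
    using sums_zero_iff_shift[of n t] t0 St by simp
  have tb: "norm (t j) \<le> (real N + 1) * (x^j / fact j)" for j
  proof -
    have ns: "norm (s j) \<le> real N"
    proof -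
      have "norm (s j) \<le> (\<Sum>k=1..N. norm (lam k ^ (j+1)))" unfolding s_def by (rule norm_sum)
      also have "\<dots> = (\<Sum>k=1..N. 1)" using ln by (intro sum.cong refl) (simp add: norm_power norm_mult)
      finally show ?thesis by simp
    qed
    have "norm (t j) \<le> norm (s j * z^j / fact j) + norm (p j * z^j / of_nat (fact j))"
      unfolding t_def by (rule norm_triangle_ineq4)
    also have "\<dots> = norm (s j) * (x^j / fact j) + norm (p j) * (x^j / fact j)"
      unfolding x_def by (simp add: norm_mult norm_divide norm_power)
    also have "\<dots> \<le> real N * (x^j / fact j) + 1 * (x^j / fact j)"
      using ns pb x0 by (intro add_mono mult_right_mono) auto
    also have "\<dots> = (real N + 1) * (x^j / fact j)" by (simp only: ring_distribs)
    finally show ?thesis .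
  qed
  define C where "C = (real N + 1) * (x^n / fact n * (x / (real n + 1)))"
  define B where "B i = (if i = 0 then (real N + 1) * (x^n / fact n) else C * (x^(i-1) / fact (i-1)))" for i
  have Bs: "B sums ((real N + 1) * (x^n / fact n * (1 + x * exp x / (real n + 1))))"
  proof -
    have "(\<lambda>i. B (Suc i)) = (\<lambda>i. C * (x^i / fact i))"
      unfolding B_def by simp
    moreover have "(\<lambda>i. C * (x^i / fact i)) sums (C * exp x)" by (intro sums_mult exp_sums_c)
    ultimately have "B sums (C * exp x + B 0)" using sums_Suc_iff[of B] by simp
    moreover have "C * exp x + B 0 = (real N + 1) * (x^n / fact n * (1 + x * exp x / (real n + 1)))"
    proof -
      have e: "x * exp x / (real n + 1) = (x / (real n + 1)) * exp x" by simp
      show ?thesis unfolding C_def B_def e by (simp add: algebra_simps)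
    qed
    ultimately show ?thesis by simp
  qed
  have tB: "norm (t (i+n)) \<le> B i" for i
  proof (cases i)
    case 0 then show ?thesis using tb[of n] unfolding B_def by simp
  next
    case (Suc i')
    have "norm (t (i+n)) \<le> (real N + 1) * (x^(Suc i' + n) / fact (Suc i' + n))"
      using tb[of "i+n"] Suc by simp
    also have "\<dots> \<le> (real N + 1) * (x^n / fact n * (x / (real n + 1) * (x^i' / fact i')))"
      using fact_split_bound[OF x0, of i' n] by (intro mult_left_mono) auto
    also have "\<dots> = B i" unfolding B_def C_def using Suc by (simp add: mult.assoc)
    finally show ?thesis .
  qed
  have "norm ((\<Sum>k=1..N. lam k * exp (lam k * z)) - (\<Sum>j. p j * z^j / of_nat (fact j)))
      = norm (\<Sum>i. t (i+n))" using sums_unique[OF St'] by simp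
  also have "\<dots> \<le> (\<Sum>i. B i)" by (rule norm_suminf_le[OF tB sums_summable[OF Bs]])
  also have "\<dots> = (real N + 1) * (x^n / fact n * (1 + x * exp x / (real n + 1)))"
    using sums_unique[OF Bs] by simp
  finally show ?thesis unfolding x_def .
qed


theorem theorem2p1:
  fixes p :: "nat \<Rightarrow> complex" and n :: nat
  assumes p_bound: "\<And>j. norm (p j) \<le> 1 / (real j + 2)^2"
    and n_pos: "n \<ge> 1"
  shows "\<exists>lam :: nat \<Rightarrow> complex.
           inj_on lam {1..2*n+1} \<and> (\<forall>k\<in>{1..2*n+1}. norm (lam k) = 1) \<and>
           (\<forall>r::real. 0 < r \<and> r < 1 \<longrightarrow> (\<forall>z::complex.
              norm ((\<Sum>k=1..2*n+1. lam k * exp (lam k * z)) - (\<Sum>j. p j * z^j / of_nat (fact j)))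
              \<le> norm z ^ n / fact n * (15 / (1 - r^(n+1))) * (real n + 2 / (1 - r))
                 * (1 + norm z * exp (norm z / r) / (r * real n + r))))"
proof -
  define N where "N = 2*n+1"
  define c where "c m = p (m - 1)" for m
  have cb: "norm (c m) \<le> 1/(real m + 1)^2" if "m \<ge> 1" for m
  proof -
    have "real (m - 1) + 2 = real m + 1" using that by (simp add: of_nat_diff)
    then show ?thesis using p_bound[of "m - 1"] unfolding c_def by (simp add: add.commute)
  qed
  obtain a where a0: "a 0 = 1"
    and ec: "\<forall>m\<in>{1..n}. of_nat m * a m = - (\<Sum>i<m. a i * c (m - i))"
    and ab: "\<forall>m\<in>{1..n}. norm (a m) \<le> 1/(real m + 1)^2"
    using coeff_exists[of c n] cb by blast
  have small: "(\<Sum>m=1..n. norm (a m)) < 1"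
  proof -
    have "(\<Sum>m=1..n. norm (a m)) \<le> (\<Sum>m=1..n. 1/(real m + 1)^2)"
      using ab by (intro sum_mono) auto
    also have "\<dots> \<le> 1 - 1/(real n + 1)" by (rule sum_inv_sq_bound)
    also have "\<dots> < 1" by simp
    finally show ?thesis .
  qed
  obtain w where winj: "inj_on w {..<2*n+1}" and wn: "\<forall>j<2*n+1. norm (w j) = 1"
    and wps: "\<forall>m\<in>{1..n}. (\<Sum>j<2*n+1. w j ^ m) = c m"
    using unit_points[OF small a0 ec] by blast
  define lam where "lam k = w (k - 1)" for k
  have linj: "inj_on lam {1..2*n+1}"
  proof (rule inj_onI)
    fix k k' assume k: "k \<in> {1..2*n+1}" "k' \<in> {1..2*n+1}" "lam k = lam k'"
    then have "k - 1 = k' - 1" using winj unfolding lam_def inj_on_def by auto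
    then show "k = k'" using k by auto
  qed
  have ln: "\<forall>k\<in>{1..2*n+1}. norm (lam k) = 1" using wn unfolding lam_def by auto
  have pb: "\<forall>j. norm (p j) \<le> 1"
  proof
    fix j
    have h: "1 \<le> (real j + 2)^2" by (rule one_le_power) simp
    have "1 / (real j + 2)^2 \<le> 1 / 1" by (rule divide_left_mono) (use h in auto)
    then have "1 / (real j + 2)^2 \<le> 1" by simp
    then show "norm (p j) \<le> 1" using p_bound[of j] by linarith
  qed
  have ps: "\<forall>j<n. (\<Sum>k=1..2*n+1. lam k ^ (j+1)) = p j"
  proof (intro allI impI)
    fix j assume j: "j < n"
    have "(\<Sum>k=1..2*n+1. lam k ^ (j+1)) = (\<Sum>k<2*n+1. lam (Suc k) ^ (j+1))"
      using sum.atLeast1_atMost_eq[of "\<lambda>k. lam k ^ (j+1)" "2*n+1"] by simp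
    also have "\<dots> = (\<Sum>k<2*n+1. w k ^ (j+1))" unfolding lam_def by simp
    also have "\<dots> = c (j+1)"
    proof -
      have "(j+1) \<in> {1..n}" using j by auto
      then show ?thesis by (rule wps[rule_format])
    qed
    finally show "(\<Sum>k=1..2*n+1. lam k ^ (j+1)) = p j" unfolding c_def by simp
  qed
  show ?thesis
  proof (intro exI[of _ lam] conjI allI impI linj ln)
    fix r :: real and z :: complex
    assume r: "0 < r \<and> r < 1"
    define x where "x = norm z"
    define X where "X = x ^ n / fact n"
    have x0: "x \<ge> 0" unfolding x_def by simp
    have X0: "X \<ge> 0" unfolding X_def using x0 by simp
    have AB: "norm ((\<Sum>k=1..2*n+1. lam k * exp (lam k * z)) - (\<Sum>j. p j * z^j / of_nat (fact j)))
       \<le> (real (2*n+1) + 1) * (X * (1 + x * exp x / (real n + 1)))"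
      using analytic_bound[OF ln pb ps, of z] unfolding X_def x_def .
    have rp: "0 < 1 - r^(n+1)" "1 - r^(n+1) \<le> 1"
      using power_Suc_less_one[of r n] r by auto
    have K1: "15 \<le> 15 / (1 - r^(n+1))"
      using rp by (simp add: le_divide_eq)
    have K2: "real n + 2 \<le> real n + 2 / (1 - r)"
      using r by (simp add: le_divide_eq)
    have K: "real (2*n+1) + 1 \<le> 15 / (1 - r^(n+1)) * (real n + 2 / (1 - r))"
    proof -
      have "15 * (real n + 2) \<le> 15 / (1 - r^(n+1)) * (real n + 2 / (1 - r))"
        using K1 K2 rp r by (intro mult_mono) auto
      moreover have "real (2*n+1) + 1 \<le> 15 * (real n + 2)" by simp
      ultimately show ?thesis by linarith
    qed
    have T: "x * exp x / (real n + 1) \<le> x * exp (x / r) / (r * real n + r)"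
    proof (rule frac_le)
      have "x \<le> x / r" using r x0 by (simp add: le_divide_eq mult_left_le)
      then show "x * exp x \<le> x * exp (x / r)" using x0 by (intro mult_left_mono) auto
      show "0 \<le> x * exp (x / r)" using x0 by simp
      show "0 < r * real n + r" using r by (intro add_nonneg_pos) auto
      have "r * real n + r = r * (real n + 1)" by (simp add: algebra_simps)
      also have "\<dots> \<le> 1 * (real n + 1)" using r by (intro mult_right_mono) auto
      finally show "r * real n + r \<le> real n + 1" by simp
    qed
    have "(real (2*n+1) + 1) * (X * (1 + x * exp x / (real n + 1)))
        = X * (real (2*n+1) + 1) * (1 + x * exp x / (real n + 1))" by (simp only: mult_ac)
    also have "\<dots> \<le> X * (15 / (1 - r^(n+1)) * (real n + 2 / (1 - r))) * (1 + x * exp (x / r) / (r * real n + r))"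
    proof (rule mult_mono)
      show "X * (real (2*n+1) + 1) \<le> X * (15 / (1 - r^(n+1)) * (real n + 2 / (1 - r)))"
        using K X0 by (rule mult_left_mono)
      show "1 + x * exp x / (real n + 1) \<le> 1 + x * exp (x / r) / (r * real n + r)" using T by simp
      have "0 \<le> 15 / (1 - r^(n+1)) * (real n + 2 / (1 - r))" using K by linarith
      then show "0 \<le> X * (15 / (1 - r^(n+1)) * (real n + 2 / (1 - r)))" by (rule mult_nonneg_nonneg[OF X0])
      show "0 \<le> 1 + x * exp x / (real n + 1)" using x0 by simp
    qed
    finally show "norm ((\<Sum>k=1..2*n+1. lam k * exp (lam k * z)) - (\<Sum>j. p j * z^j / of_nat (fact j)))
              \<le> norm z ^ n / fact n * (15 / (1 - r^(n+1))) * (real n + 2 / (1 - r))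
                 * (1 + norm z * exp (norm z / r) / (r * real n + r))"
      using AB unfolding X_def x_def by (simp add: mult.assoc)
  qed
qed

end
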